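(* Let $(X,\|\cdot\|_X)$ be a finite-dimensional real normed space and $x\in S_X$. Then $\|\cdot\|_X$ fails to be differentiable at $x$ if and only if there exist $\delta>0$ and $\varepsilon_0>0$ such that for every $0<\varepsilon<\varepsilon_0$ there exist $u,v\in S_X\setminus\{x,-x\}$ with $$\max\{\|u-x\|_X,\|v+x\|_X\}\le\varepsilon\quad\text{and}\quad \|u-v\|_X\le 2-\delta\varepsilon.$$
   Context: $S_X=\{x\in X:\|x\|_X=1\}$. *)

theory Defs
  imports "HOL-Analysis.Analysis"
begin

end

theory Submission
  imports Defs "HOL-Analysis.Analysis"
begin


lemma span_dist_bound:
  fixes a w :: "'a::real_normed_vector"
  assumes "w \<in> span S"
  shows "\<bar>c\<bar> * infdist a (span S) \<le> norm (c *\<^sub>R a - w)"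
proof (cases "c = 0")
  case True then show ?thesis by simp
next
  case False
  have "(1/c) *\<^sub>R w \<in> span S" using assms by (simp add: span_scale)
  then have "infdist a (span S) \<le> dist a ((1/c) *\<^sub>R w)" by (rule infdist_le)
  also have "\<dots> = norm (a - (1/c) *\<^sub>R w)" by (simp add: dist_norm)
  finally have "\<bar>c\<bar> * infdist a (span S) \<le> \<bar>c\<bar> * norm (a - (1/c) *\<^sub>R w)"
    by (simp add: mult_left_mono)
  also have "\<dots> = norm (c *\<^sub>R (a - (1/c) *\<^sub>R w))" by simp
  also have "c *\<^sub>R (a - (1/c) *\<^sub>R w) = c *\<^sub>R a - w" using False
    by (simp add: algebra_simps)
  finally show ?thesis .
qed

lemma closed_span_finite:
  fixes S :: "'a::real_normed_vector set"
  assumes "finite S"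
  shows "closed (span S)"
  using assms
proof (induction S rule: finite_induct)
  case empty
  then show ?case by simp
next
  case (insert a S)
  show ?case
  proof (cases "a \<in> span S")
    case True
    then show ?thesis using insert by (simp add: span_redundant)
  next
    case False
    define d where "d = infdist a (span S)"
    have ne: "span S \<noteq> {}" using span_zero by blast
    have "closure (span S) = span S" using insert.IH by (rule closure_closed)
    then have "a \<notin> closure (span S)" using False by simp
    then have "infdist a (span S) \<noteq> 0" using in_closure_iff_infdist_zero[OF ne] by blast
    then have dpos: "d > 0" using infdist_nonneg[of a "span S"] unfolding d_def by linarith
    show ?thesis
      unfolding closed_sequential_limits
    proof (intro allI impI, elim conjE)
      fix z l
      assume zin: "\<forall>n. z n \<in> span (insert a S)" and zl: "z \<longlonglongrightarrow> l"
      have "\<forall>n. \<exists>k. z n - k *\<^sub>R a \<in> span S" using zin span_breakdown_eq by blast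
      then obtain t where t: "\<And>n. z n - t n *\<^sub>R a \<in> span S" by metis
      have bd: "\<bar>t m - t n\<bar> * d \<le> norm (z m - z n)" for m n
      proof -
        have "(z n - t n *\<^sub>R a) - (z m - t m *\<^sub>R a) \<in> span S" using t by (simp add: span_diff)
        from span_dist_bound[OF this, of "t m - t n" a]
        have "\<bar>t m - t n\<bar> * d \<le> norm ((t m - t n) *\<^sub>R a - ((z n - t n *\<^sub>R a) - (z m - t m *\<^sub>R a)))"
          by (simp add: d_def)
        also have "(t m - t n) *\<^sub>R a - ((z n - t n *\<^sub>R a) - (z m - t m *\<^sub>R a)) = z m - z n"
          by (simp add: algebra_simps)
        finally show ?thesis .
      qed
      have "Cauchy z" using zl by (rule LIMSEQ_imp_Cauchy)
      have "Cauchy t"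
        unfolding Cauchy_def
      proof (intro allI impI)
        fix e :: real assume "e > 0"
        then have "e * d > 0" using dpos by simp
        then obtain M where M: "\<forall>m\<ge>M. \<forall>n\<ge>M. dist (z m) (z n) < e * d"
          using \<open>Cauchy z\<close> unfolding Cauchy_def by blast
        show "\<exists>M. \<forall>m\<ge>M. \<forall>n\<ge>M. dist (t m) (t n) < e"
        proof (intro exI allI impI)
          fix m n assume "m \<ge> M" "n \<ge> M"
          then have "norm (z m - z n) < e * d" using M by (simp add: dist_norm)
          then have "\<bar>t m - t n\<bar> * d < e * d" using bd[of m n] by linarith
          then show "dist (t m) (t n) < e" using dpos by (simp add: dist_real_def)
        qed
      qed
      then obtain T where tT: "t \<longlonglongrightarrow> T" using Cauchy_convergent_iff convergent_def by blast
      have lim: "(\<lambda>n. z n - t n *\<^sub>R a) \<longlonglongrightarrow> l - T *\<^sub>R a"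
        by (intro tendsto_intros zl tT)
      have "l - T *\<^sub>R a \<in> span S"
      proof (rule closed_sequentially[OF insert.IH])
        show "(\<lambda>n. z n - t n *\<^sub>R a) n \<in> span S" for n using t[of n] by simp
        show "(\<lambda>n. z n - t n *\<^sub>R a) \<longlonglongrightarrow> l - T *\<^sub>R a" by (rule lim)
      qed
      then show "l \<in> span (insert a S)" using span_breakdown_eq by blast
    qed
  qed
qed

lemma coord_bound:
  fixes B :: "'a::real_normed_vector set"
  assumes fin: "finite B" and ind: "independent B" and sp: "span B = UNIV"
  shows "\<exists>C>0. \<forall>h. \<forall>b\<in>B. \<bar>representation B h b\<bar> \<le> C * norm h"
proof -
  have "\<exists>d>0. \<forall>h. \<bar>representation B h b\<bar> * d \<le> norm h" if bB: "b \<in> B" for b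
  proof -
    let ?S = "B - {b}"
    have cl: "closed (span ?S)" using fin by (intro closed_span_finite) simp
    have "b \<notin> span ?S" using ind bB dependent_def by blast
    define d where "d = infdist b (span ?S)"
    have "span ?S \<noteq> {}" using span_zero by blast
    then have "d \<noteq> 0" using in_closure_iff_infdist_zero[OF \<open>span ?S \<noteq> {}\<close>] d_def
       \<open>b \<notin> span ?S\<close> cl closure_closed by metis
    then have dpos: "d > 0" using infdist_nonneg[of b "span ?S"] d_def by linarith
    show ?thesis
    proof (intro exI conjI allI)
      show "d > 0" by fact
      fix h
      let ?r = "representation B h"
      have hs: "h = (\<Sum>b'\<in>B. ?r b' *\<^sub>R b')"
        using sum_representation_eq[OF ind _ fin] sp by simp
      also have "\<dots> = ?r b *\<^sub>R b + (\<Sum>b'\<in>?S. ?r b' *\<^sub>R b')"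
        using fin bB by (simp add: sum.remove)
      finally have "?r b *\<^sub>R b - h = - (\<Sum>b'\<in>?S. ?r b' *\<^sub>R b')" by (simp add: algebra_simps)
      moreover have "- (\<Sum>b'\<in>?S. ?r b' *\<^sub>R b') \<in> span ?S"
        by (intro span_neg span_sum span_scale span_base) auto
      ultimately have "?r b *\<^sub>R b - h \<in> span ?S" by simp
      from span_dist_bound[OF this, of "?r b" b]
      have "\<bar>?r b\<bar> * d \<le> norm (?r b *\<^sub>R b - (?r b *\<^sub>R b - h))" by (simp add: d_def)
      then show "\<bar>?r b\<bar> * d \<le> norm h" by simp
    qed
  qed
  then obtain d where d: "\<And>b. b \<in> B \<Longrightarrow> d b > 0 \<and> (\<forall>h. \<bar>representation B h b\<bar> * d b \<le> norm h)"
    by metis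
  define C where "C = 1 + (\<Sum>b\<in>B. 1 / d b)"
  have Cge: "1 / d b \<le> C" if "b \<in> B" for b
  proof -
    have "1 / d b \<le> (\<Sum>b\<in>B. 1 / d b)"
    proof (rule member_le_sum)
      show "b \<in> B" by fact
      show "finite B" by fact
      fix b' assume "b' \<in> B - {b}"
      then have "d b' > 0" using d by blast
      then show "0 \<le> 1 / d b'" by simp
    qed
    then show ?thesis unfolding C_def by linarith
  qed
  have Cpos: "C > 0"
  proof -
    have "(\<Sum>b\<in>B. 1 / d b) \<ge> 0"
    proof (rule sum_nonneg)
      fix b' assume "b' \<in> B"
      then have "d b' > 0" using d by blast
      then show "0 \<le> 1 / d b'" by simp
    qed
    then show ?thesis unfolding C_def by linarith
  qed
  show ?thesis
  proof (intro exI conjI allI ballI)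
    show "C > 0" by fact
    fix h b assume "b \<in> B"
    then have db: "d b > 0" "\<bar>representation B h b\<bar> * d b \<le> norm h" using d by auto
    then have "\<bar>representation B h b\<bar> \<le> norm h / d b" by (simp add: field_simps)
    also have "\<dots> = (1 / d b) * norm h" by simp
    also have "\<dots> \<le> C * norm h" using Cge[OF \<open>b \<in> B\<close>] by (intro mult_right_mono) auto
    finally show "\<bar>representation B h b\<bar> \<le> C * norm h" .
  qed
qed



definition Qd :: "'a::real_normed_vector \<Rightarrow> 'a \<Rightarrow> real \<Rightarrow> real" where
  "Qd x h t = (norm (x + t *\<^sub>R h) - norm x) / t"

definition dd :: "'a::real_normed_vector \<Rightarrow> 'a \<Rightarrow> real" where
  "dd x h = Inf (Qd x h ` {0<..})"

lemma Qd_lower: "0 < t \<Longrightarrow> - norm h \<le> Qd x h t"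
proof -
  assume t: "0 < t"
  have "norm x \<le> norm (x + t *\<^sub>R h) + norm (t *\<^sub>R h)"
    using norm_triangle_ineq4[of "x + t *\<^sub>R h" "t *\<^sub>R h"] by simp
  then have "- t * norm h \<le> norm (x + t *\<^sub>R h) - norm x" using t by simp
  then show ?thesis using t unfolding Qd_def by (simp add: field_simps)
qed

lemma Qd_mono:
  assumes s: "0 < s" and st: "s \<le> t"
  shows "Qd x h s \<le> Qd x h t"
proof -
  have t: "0 < t" using s st by simp
  have "x + s *\<^sub>R h = (1 - s/t) *\<^sub>R x + (s/t) *\<^sub>R (x + t *\<^sub>R h)"
    using t by (simp add: algebra_simps)
  then have "norm (x + s *\<^sub>R h) \<le> norm ((1 - s/t) *\<^sub>R x) + norm ((s/t) *\<^sub>R (x + t *\<^sub>R h))"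
    by (simp only:) (rule norm_triangle_ineq)
  also have "\<dots> = (1 - s/t) * norm x + (s/t) * norm (x + t *\<^sub>R h)"
    using s st t by simp
  finally have "norm (x + s *\<^sub>R h) - norm x \<le> (s/t) * (norm (x + t *\<^sub>R h) - norm x)"
    by (simp add: algebra_simps)
  then show ?thesis unfolding Qd_def using s t by (simp add: field_simps)
qed

lemma bdd_Qd: "bdd_below (Qd x h ` {0<..})"
  by (rule bdd_belowI2[of _ "- norm h"]) (simp add: Qd_lower)

lemma dd_le: "0 < t \<Longrightarrow> dd x h \<le> Qd x h t"
  unfolding dd_def by (rule cInf_lower) (auto simp: bdd_Qd)

lemma dd_ge_bound: "(\<And>t. 0 < t \<Longrightarrow> v \<le> Qd x h t) \<Longrightarrow> v \<le> dd x h"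
  unfolding dd_def by (rule cInf_greatest) auto

lemma dd_lower: "- norm h \<le> dd x h"
  by (rule dd_ge_bound) (simp add: Qd_lower)

lemma dd_approx:
  assumes "e > 0"
  shows "\<exists>\<tau>>0. \<forall>t. 0 < t \<and> t < \<tau> \<longrightarrow> Qd x h t < dd x h + e"
proof -
  have "Inf (Qd x h ` {0<..}) < dd x h + e" using assms unfolding dd_def by simp
  moreover have ne: "Qd x h ` {0<..} \<noteq> {}" by auto
  ultimately have "\<exists>v\<in>Qd x h ` {0<..}. v < dd x h + e"
    using cInf_less_iff[OF ne bdd_Qd, of "dd x h + e"] by simp
  then obtain t0 where t0: "t0 > 0" "Qd x h t0 < dd x h + e" by auto
  show ?thesis
  proof (intro exI conjI allI impI)
    show "t0 > 0" by fact
    fix t assume "0 < t \<and> t < t0"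
    then have "Qd x h t \<le> Qd x h t0" by (intro Qd_mono) auto
    then show "Qd x h t < dd x h + e" using t0 by simp
  qed
qed

lemma dd_le_bound:
  assumes "\<And>e. e > 0 \<Longrightarrow> \<exists>t>0. Qd x h t \<le> v + e"
  shows "dd x h \<le> v"
proof (rule field_le_epsilon)
  fix e :: real assume "e > 0"
  then obtain t where "t > 0" "Qd x h t \<le> v + e" using assms by blast
  then show "dd x h \<le> v + e" using dd_le[of t x h] by simp
qed

lemma const_img: "(\<lambda>t::real. c) ` {0<..} = {c}"
proof -
  have "({0<..} :: real set) \<noteq> {}" by (metis greaterThan_iff empty_iff zero_less_one)
  then show ?thesis by (simp add: image_constant_conv)
qed

lemma half_split: "(x::'a::real_vector) = (1/2) *\<^sub>R x + (1/2) *\<^sub>R x"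
  by (simp add: scaleR_add_left[symmetric])

lemma dd_zero: "dd x 0 = 0"
proof -
  have "Qd x 0 = (\<lambda>t. 0)" by (auto simp: Qd_def fun_eq_iff)
  then show ?thesis unfolding dd_def by (simp add: const_img)
qed

lemma dd_scale_pos:
  assumes c: "c > 0"
  shows "dd x (c *\<^sub>R h) = c * dd x h"
proof -
  have Q: "Qd x (c *\<^sub>R h) t = c * Qd x h (c * t)" if "t > 0" for t
    using c that unfolding Qd_def by (simp add: field_simps)
  show ?thesis
  proof (rule antisym)
    show "dd x (c *\<^sub>R h) \<le> c * dd x h"
    proof (rule dd_le_bound)
      fix e :: real assume "e > 0"
      then obtain \<tau> where \<tau>: "\<tau> > 0" "\<forall>t. 0 < t \<and> t < \<tau> \<longrightarrow> Qd x h t < dd x h + e / c"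
        using dd_approx[of "e / c" x h] c by auto
      define t where "t = \<tau> / (2 * c)"
      have "t > 0" "c * t < \<tau>" using \<tau> c by (auto simp: t_def)
      then have "Qd x h (c * t) < dd x h + e / c" using \<tau> c by simp
      then have "c * Qd x h (c * t) \<le> c * dd x h + e" using c by (simp add: field_simps)
      then show "\<exists>t>0. Qd x (c *\<^sub>R h) t \<le> c * dd x h + e" using Q \<open>t > 0\<close> by auto
    qed
    show "c * dd x h \<le> dd x (c *\<^sub>R h)"
    proof (rule dd_ge_bound)
      fix t :: real assume "t > 0"
      then have "dd x h \<le> Qd x h (c * t)" using c by (intro dd_le) simp
      then show "c * dd x h \<le> Qd x (c *\<^sub>R h) t" using Q[OF \<open>t>0\<close>] c by simp
    qed
  qed
qed

lemma dd_scale_nonneg: "c \<ge> 0 \<Longrightarrow> dd x (c *\<^sub>R h) = c * dd x h"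
  by (cases "c = 0") (auto simp: dd_zero dd_scale_pos)

lemma dd_subadd: "dd x (a + b) \<le> dd x a + dd x b"
proof (rule dd_le_bound)
  fix e :: real assume "e > 0"
  obtain \<tau>a where \<tau>a: "\<tau>a > 0" "\<forall>t. 0 < t \<and> t < \<tau>a \<longrightarrow> Qd x a t < dd x a + e/2"
    using dd_approx[of "e/2" x a] \<open>e > 0\<close> by auto
  obtain \<tau>b where \<tau>b: "\<tau>b > 0" "\<forall>t. 0 < t \<and> t < \<tau>b \<longrightarrow> Qd x b t < dd x b + e/2"
    using dd_approx[of "e/2" x b] \<open>e > 0\<close> by auto
  define t where "t = min \<tau>a \<tau>b / 4"
  have t: "t > 0" "2 * t < \<tau>a" "2 * t < \<tau>b" using \<tau>a \<tau>b by (auto simp: t_def)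
  have "x + t *\<^sub>R (a + b) = (1/2) *\<^sub>R (x + (2*t) *\<^sub>R a) + (1/2) *\<^sub>R (x + (2*t) *\<^sub>R b)"
    by (subst (1) half_split) (simp add: algebra_simps)
  then have "norm (x + t *\<^sub>R (a + b)) \<le> norm ((1/2) *\<^sub>R (x + (2*t) *\<^sub>R a)) + norm ((1/2) *\<^sub>R (x + (2*t) *\<^sub>R b))"
    by (simp only:) (rule norm_triangle_ineq)
  then have "norm (x + t *\<^sub>R (a + b)) - norm x \<le> (norm (x + (2*t) *\<^sub>R a) - norm x) / 2 + (norm (x + (2*t) *\<^sub>R b) - norm x) / 2"
  proof -
    assume "norm (x + t *\<^sub>R (a + b)) \<le> norm ((1/2) *\<^sub>R (x + (2*t) *\<^sub>R a)) + norm ((1/2) *\<^sub>R (x + (2*t) *\<^sub>R b))"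
    then have "norm (x + t *\<^sub>R (a + b)) \<le> norm (x + (2*t) *\<^sub>R a) / 2 + norm (x + (2*t) *\<^sub>R b) / 2" by simp
    then show ?thesis by argo
  qed
  then have "Qd x (a + b) t \<le> ((norm (x + (2*t) *\<^sub>R a) - norm x) / 2 + (norm (x + (2*t) *\<^sub>R b) - norm x) / 2) / t"
    unfolding Qd_def using t by (intro divide_right_mono) auto
  also have "\<dots> = Qd x a (2*t) + Qd x b (2*t)"
    unfolding Qd_def using t by (simp add: field_simps)
  also have "\<dots> \<le> dd x a + dd x b + e"
  proof -
    have "Qd x a (2*t) < dd x a + e/2" using \<tau>a t by simp
    moreover have "Qd x b (2*t) < dd x b + e/2" using \<tau>b t by simp
    ultimately show ?thesis by simp
  qed
  finally show "\<exists>t>0. Qd x (a + b) t \<le> dd x a + dd x b + e" using t by auto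
qed

lemma dd_self: "dd x x = norm x"
proof -
  have Q: "Qd x x t = norm x" if "t > 0" for t
  proof -
    have eq: "x + t *\<^sub>R x = (1 + t) *\<^sub>R x" by (simp add: algebra_simps)
    have "norm (x + t *\<^sub>R x) = norm ((1 + t) *\<^sub>R x)" by (simp only: eq)
    also have "\<dots> = \<bar>1 + t\<bar> * norm x" by (rule norm_scaleR)
    also have "\<dots> = (1 + t) * norm x" using that by simp
    finally show ?thesis using that unfolding Qd_def by (simp add: field_simps)
  qed
  have "Qd x x ` {0<..} = {norm x}"
  proof
    show "Qd x x ` {0<..} \<subseteq> {norm x}" using Q by auto
    show "{norm x} \<subseteq> Qd x x ` {0<..}" using Q[of 1] by (auto intro: image_eqI[of _ _ 1])
  qed
  then show ?thesis unfolding dd_def by simp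
qed

lemma dd_neg_self: "dd x (- x) = - norm x"
proof (rule antisym)
  show "dd x (- x) \<le> - norm x"
  proof -
    have "x + (1/2) *\<^sub>R (- x) = (1/2) *\<^sub>R x" by (subst (1) half_split) simp
    then have "Qd x (- x) (1/2) = - norm x" unfolding Qd_def by simp
    then show ?thesis using dd_le[of "1/2" x "-x"] by simp
  qed
  show "- norm x \<le> dd x (- x)" using dd_lower[where x=x and h="-x"] by simp
qed



lemma dd_mult_self: "dd x (l *\<^sub>R x) = l * norm x"
proof (cases "l \<ge> 0")
  case True then show ?thesis by (simp add: dd_scale_nonneg dd_self)
next
  case False
  have "dd x (l *\<^sub>R x) = dd x ((- l) *\<^sub>R (- x))" by simp
  also have "\<dots> = (- l) * dd x (- x)" using False by (intro dd_scale_nonneg) simp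
  also have "\<dots> = l * norm x" by (simp add: dd_neg_self)
  finally show ?thesis .
qed

lemma dd_shift: "dd x (z + l *\<^sub>R x) = dd x z + l * norm x"
proof (rule antisym)
  show "dd x (z + l *\<^sub>R x) \<le> dd x z + l * norm x"
    using dd_subadd[of x z "l *\<^sub>R x"] by (simp add: dd_mult_self)
  have "dd x z = dd x ((z + l *\<^sub>R x) + (- l) *\<^sub>R x)" by simp
  also have "\<dots> \<le> dd x (z + l *\<^sub>R x) + dd x ((- l) *\<^sub>R x)" by (rule dd_subadd)
  also have "\<dots> = dd x (z + l *\<^sub>R x) + (- l) * norm x" by (simp only: dd_mult_self)
  finally show "dd x z + l * norm x \<le> dd x (z + l *\<^sub>R x)" by simp
qed

lemma dd_sym_nonneg: "0 \<le> dd x h + dd x (- h)"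
  using dd_subadd[of x h "- h"] by (simp add: dd_zero)

lemma Qd_mult: "0 < t \<Longrightarrow> t * Qd x h t = norm (x + t *\<^sub>R h) - norm x"
  unfolding Qd_def by simp

lemma dd_le_diff: "dd x h \<le> norm (x + h) - norm x"
  using dd_le[of 1 x h] unfolding Qd_def by simp

lemma dd_dir:
  assumes lin: "\<And>c h. dd x (c *\<^sub>R h) = c * dd x h" and eta: "\<eta> > 0"
  shows "\<exists>\<tau>>0. \<forall>s. \<bar>s\<bar> < \<tau> \<longrightarrow> norm (x + s *\<^sub>R b) - norm x - dd x (s *\<^sub>R b) \<le> \<eta> * \<bar>s\<bar>"
proof -
  obtain \<tau>1 where \<tau>1: "\<tau>1 > 0" "\<forall>t. 0 < t \<and> t < \<tau>1 \<longrightarrow> Qd x b t < dd x b + \<eta>"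
    using dd_approx[OF eta] by blast
  obtain \<tau>2 where \<tau>2: "\<tau>2 > 0" "\<forall>t. 0 < t \<and> t < \<tau>2 \<longrightarrow> Qd x (- b) t < dd x (- b) + \<eta>"
    using dd_approx[OF eta] by blast
  show ?thesis
  proof (intro exI conjI allI impI)
    show "min \<tau>1 \<tau>2 > 0" using \<tau>1 \<tau>2 by simp
    fix s :: real assume s: "\<bar>s\<bar> < min \<tau>1 \<tau>2"
    consider "s > 0" | "s = 0" | "s < 0" by linarith
    then show "norm (x + s *\<^sub>R b) - norm x - dd x (s *\<^sub>R b) \<le> \<eta> * \<bar>s\<bar>"
    proof cases
      case 1
      then have "Qd x b s < dd x b + \<eta>" using \<tau>1 s by simp
      then have "s * Qd x b s \<le> s * (dd x b + \<eta>)" using 1 by simp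
      then show ?thesis using Qd_mult[OF 1, of x b] lin[of s b] 1 by (simp add: algebra_simps)
    next
      case 2
      then show ?thesis by (simp add: dd_zero)
    next
      case 3
      then have p: "- s > 0" by simp
      then have "Qd x (- b) (- s) < dd x (- b) + \<eta>" using \<tau>2 s by simp
      then have "(- s) * Qd x (- b) (- s) \<le> (- s) * (dd x (- b) + \<eta>)" using p by simp
      moreover have "(- s) *\<^sub>R (- b) = s *\<^sub>R b" by simp
      ultimately show ?thesis using Qd_mult[OF p, of x "- b"] lin[of "- s" "- b"] 3
        by (simp add: algebra_simps)
    qed
  qed
qed



lemma dd_linear_of_sym:
  assumes sym: "\<And>h. dd x h + dd x (- h) \<le> 0"
  shows "bounded_linear (dd x)" and "\<And>c h. dd x (c *\<^sub>R h) = c * dd x h"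
proof -
  have odd: "dd x (- h) = - dd x h" for h
    using sym[of h] dd_sym_nonneg[of x h] by linarith
  have add: "dd x (a + b) = dd x a + dd x b" for a b
  proof (rule antisym)
    show "dd x (a + b) \<le> dd x a + dd x b" by (rule dd_subadd)
    have e: "- (a + b) = - a + - b" by simp
    have "dd x (- (a + b)) \<le> dd x (- a) + dd x (- b)" unfolding e by (rule dd_subadd)
    then show "dd x a + dd x b \<le> dd x (a + b)" unfolding odd by linarith
  qed
  show scl: "dd x (c *\<^sub>R h) = c * dd x h" for c h
  proof (cases "c \<ge> 0")
    case True then show ?thesis by (simp add: dd_scale_nonneg)
  next
    case False
    have "dd x (c *\<^sub>R h) = dd x ((- c) *\<^sub>R (- h))" by simp
    also have "\<dots> = (- c) * dd x (- h)" using False by (intro dd_scale_nonneg) simp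
    finally show ?thesis by (simp add: odd)
  qed
  have bnd: "norm (dd x h) \<le> norm h * 1" for h
  proof -
    have "dd x h \<le> norm (x + h) - norm x" by (rule dd_le_diff)
    also have "\<dots> \<le> norm h" using norm_triangle_ineq[of x h] by simp
    finally show ?thesis using dd_lower[of h x] by simp
  qed
  show "bounded_linear (dd x)"
  proof (rule bounded_linear_intro[where K=1])
    fix a b show "dd x (a + b) = dd x a + dd x b" by (rule add)
  next
    fix r h show "dd x (r *\<^sub>R h) = r *\<^sub>R dd x h" using scl[of r h] by simp
  next
    fix h show "norm (dd x h) \<le> norm h * 1" by (rule bnd)
  qed
qed

lemma findim_basis:
  fixes x :: "'a::real_normed_vector"
  assumes findim: "\<exists>B::'a set. finite B \<and> span B = UNIV" and x0: "x \<noteq> 0"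
  obtains B :: "'a set" where "finite B" "independent B" "span B = UNIV" "B \<noteq> {}"
proof -
  obtain B0 :: "'a set" where B0: "finite B0" "span B0 = UNIV" using findim by blast
  obtain B where BB0: "B \<subseteq> B0" and ind: "independent B" and sp0: "B0 \<subseteq> span B"
    by (rule maximal_independent_subset[of B0])
  have finB: "finite B" using BB0 B0 finite_subset by blast
  have spB: "span B = UNIV"
  proof -
    have "span B0 \<subseteq> span (span B)" by (rule span_mono[OF sp0])
    then have "UNIV \<subseteq> span B" unfolding B0(2) span_span .
    then show ?thesis by blast
  qed
  have Bne: "B \<noteq> {}"
  proof
    assume B: "B = {}"
    have "x \<in> span B" using spB by simp
    then show False using B x0 by simp
  qed
  show ?thesis by (rule that[OF finB ind spB Bne])
qed



lemma dd_frechet_bound: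
  fixes x :: "'a::real_normed_vector" and B :: "'a set"
  assumes finB: "finite B" and ind: "independent B" and spB: "span B = UNIV" and Bne: "B \<noteq> {}"
    and scl: "\<And>c h. dd x (c *\<^sub>R h) = c * dd x h" and lin: "linear (dd x)"
    and e: "e > 0"
  shows "\<exists>d>0. \<forall>h. norm h < d \<longrightarrow> norm (x + h) - norm x - dd x h \<le> e * norm h"
proof -
  define n where "n = card B"
  have npos: "n > 0" using finB Bne by (simp add: n_def card_gt_0_iff)
  obtain C where Cpos: "C > 0" and Cb: "\<And>(h::'a) b. b \<in> B \<Longrightarrow> \<bar>representation B h b\<bar> \<le> C * norm h"
    using coord_bound[OF finB ind spB] by blast
  define \<eta> where "\<eta> = e / (real n * C)"
  have eta: "\<eta> > 0" using e npos Cpos by (simp add: \<eta>_def)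
  have "\<forall>b\<in>B. \<exists>\<tau>>0. \<forall>s. \<bar>s\<bar> < \<tau> \<longrightarrow> norm (x + s *\<^sub>R b) - norm x - dd x (s *\<^sub>R b) \<le> \<eta> * \<bar>s\<bar>"
    using dd_dir[OF scl eta] by blast
  from bchoice[OF this] obtain \<tau> where \<tau>: "\<forall>b\<in>B. \<tau> b > 0 \<and> (\<forall>s. \<bar>s\<bar> < \<tau> b \<longrightarrow> norm (x + s *\<^sub>R b) - norm x - dd x (s *\<^sub>R b) \<le> \<eta> * \<bar>s\<bar>)"
    by blast
  define \<tau>0 where "\<tau>0 = Min (\<tau> ` B)"
  have t0pos: "\<tau>0 > 0" unfolding \<tau>0_def using finB Bne \<tau> by (subst Min_gr_iff) auto
  have t0le: "\<tau>0 \<le> \<tau> b" if "b \<in> B" for b unfolding \<tau>0_def using finB that by simp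
  define d where "d = \<tau>0 / (real n * C)"
  show ?thesis
  proof (intro exI conjI allI impI)
    show "d > 0" using t0pos npos Cpos by (simp add: d_def)
    fix h :: 'a assume hd: "norm h < d"
    let ?r = "representation B h"
    have hsum: "h = (\<Sum>b\<in>B. ?r b *\<^sub>R b)"
      using sum_representation_eq[OF ind _ finB] spB by simp
    have small: "\<bar>real n * ?r b\<bar> < \<tau> b" if "b \<in> B" for b
    proof -
      have "\<bar>real n * ?r b\<bar> = real n * \<bar>?r b\<bar>" by (simp add: abs_mult)
      also have "\<dots> \<le> real n * (C * norm h)" using Cb[OF that] by (intro mult_left_mono) auto
      also have "\<dots> < real n * (C * d)" using hd npos Cpos by simp
      also have "\<dots> = \<tau>0" using npos Cpos by (simp add: d_def)
      finally show ?thesis using t0le[OF that] by simp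
    qed
    have xh: "x + h = (\<Sum>b\<in>B. (1 / real n) *\<^sub>R (x + (real n * ?r b) *\<^sub>R b))"
    proof -
      have "(\<Sum>b\<in>B. (1 / real n) *\<^sub>R (x + (real n * ?r b) *\<^sub>R b))
           = (\<Sum>b\<in>B. (1 / real n) *\<^sub>R x + ?r b *\<^sub>R b)"
        using npos by (intro sum.cong refl) (simp add: scaleR_add_right)
      also have "\<dots> = (\<Sum>b\<in>B. (1 / real n) *\<^sub>R x) + (\<Sum>b\<in>B. ?r b *\<^sub>R b)"
        by (rule sum.distrib)
      also have "(\<Sum>b\<in>B. (1 / real n) *\<^sub>R x) = x"
      proof -
        have "(\<Sum>b\<in>B. (1 / real n) *\<^sub>R x) = real n *\<^sub>R ((1 / real n) *\<^sub>R x)"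
          by (simp only: sum_constant_scaleR n_def)
        also have "\<dots> = x" using npos by simp
        finally show ?thesis .
      qed
      finally show ?thesis using hsum by simp
    qed
    have "norm (x + h) \<le> (\<Sum>b\<in>B. norm ((1 / real n) *\<^sub>R (x + (real n * ?r b) *\<^sub>R b)))"
      unfolding xh by (rule norm_sum)
    also have "\<dots> = (\<Sum>b\<in>B. (1 / real n) * norm (x + (real n * ?r b) *\<^sub>R b))"
      by simp
    finally have n1: "norm (x + h) \<le> (\<Sum>b\<in>B. (1 / real n) * norm (x + (real n * ?r b) *\<^sub>R b))" .
    have n2: "dd x h = (\<Sum>b\<in>B. (1 / real n) * dd x ((real n * ?r b) *\<^sub>R b))"
    proof -
      have "dd x h = dd x (\<Sum>b\<in>B. ?r b *\<^sub>R b)" using hsum by simp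
      also have "\<dots> = (\<Sum>b\<in>B. dd x (?r b *\<^sub>R b))" by (rule linear_sum[OF lin])
      also have "\<dots> = (\<Sum>b\<in>B. (1 / real n) * dd x ((real n * ?r b) *\<^sub>R b))"
        using npos by (intro sum.cong refl) (simp add: scl)
      finally show ?thesis .
    qed
    have n3: "norm x = (\<Sum>b\<in>B. (1 / real n) * norm x)" using npos by (simp add: n_def)
    have "norm (x + h) - norm x - dd x h \<le>
        (\<Sum>b\<in>B. (1 / real n) * norm (x + (real n * ?r b) *\<^sub>R b)) - (\<Sum>b\<in>B. (1 / real n) * norm x)
          - (\<Sum>b\<in>B. (1 / real n) * dd x ((real n * ?r b) *\<^sub>R b))"
      using n1 n2 n3 by linarith
    also have "\<dots> = (\<Sum>b\<in>B. (1 / real n) * (norm (x + (real n * ?r b) *\<^sub>R b) - norm x - dd x ((real n * ?r b) *\<^sub>R b)))"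
      by (simp add: sum_subtractf right_diff_distrib)
    also have "\<dots> \<le> (\<Sum>b\<in>B. (1 / real n) * (\<eta> * \<bar>real n * ?r b\<bar>))"
    proof (rule sum_mono)
      fix b assume b: "b \<in> B"
      have "norm (x + (real n * ?r b) *\<^sub>R b) - norm x - dd x ((real n * ?r b) *\<^sub>R b) \<le> \<eta> * \<bar>real n * ?r b\<bar>"
        using \<tau> small[OF b] b by blast
      then show "(1 / real n) * (norm (x + (real n * ?r b) *\<^sub>R b) - norm x - dd x ((real n * ?r b) *\<^sub>R b))
          \<le> (1 / real n) * (\<eta> * \<bar>real n * ?r b\<bar>)"
        by (intro mult_left_mono) auto
    qed
    also have "\<dots> = (\<Sum>b\<in>B. \<eta> * \<bar>?r b\<bar>)"
      using npos by (intro sum.cong refl) (simp add: abs_mult)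
    also have "\<dots> \<le> (\<Sum>b\<in>B. \<eta> * (C * norm h))"
    proof (rule sum_mono)
      fix b assume "b \<in> B"
      then show "\<eta> * \<bar>?r b\<bar> \<le> \<eta> * (C * norm h)" using Cb eta by (intro mult_left_mono) auto
    qed
    also have "\<dots> = real n * \<eta> * C * norm h" by (simp add: n_def)
    also have "\<dots> = e * norm h" using npos Cpos by (simp add: \<eta>_def)
    finally show "norm (x + h) - norm x - dd x h \<le> e * norm h" .
  qed
qed

lemma norm_diff_at:
  fixes x :: "'a::real_normed_vector"
  assumes findim: "\<exists>B::'a set. finite B \<and> span B = UNIV"
    and x1: "norm x = 1"
    and sym: "\<And>h. dd x h + dd x (- h) \<le> 0"
  shows "norm differentiable (at x)"
proof -
  have bl: "bounded_linear (dd x)" and scl: "\<And>c h. dd x (c *\<^sub>R h) = c * dd x h"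
    using dd_linear_of_sym[OF sym] by auto
  have lin: "linear (dd x)" using bl by (rule bounded_linear.linear)
  have x0: "x \<noteq> 0" using x1 by auto
  obtain B :: "'a set" where B: "finite B" "independent B" "span B = UNIV" "B \<noteq> {}"
    using findim_basis[OF findim x0] by blast
  have "(norm has_derivative dd x) (at x)"
    unfolding has_derivative_at_alt
  proof (intro conjI allI impI bl)
    fix e :: real assume "e > 0"
    then obtain d where d: "d > 0" "\<forall>h. norm h < d \<longrightarrow> norm (x + h) - norm x - dd x h \<le> e * norm h"
      using dd_frechet_bound[OF B scl lin] by blast
    show "\<exists>d>0. \<forall>y. norm (y - x) < d \<longrightarrow> norm (norm y - norm x - dd x (y - x)) \<le> e * norm (y - x)"
    proof (intro exI conjI allI impI)
      show "d > 0" by fact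
      fix y assume "norm (y - x) < d"
      then have "norm (x + (y - x)) - norm x - dd x (y - x) \<le> e * norm (y - x)" using d(2) by blast
      then have up: "norm y - norm x - dd x (y - x) \<le> e * norm (y - x)" by simp
      have "dd x (y - x) \<le> norm (x + (y - x)) - norm x" by (rule dd_le_diff)
      then have lo: "0 \<le> norm y - norm x - dd x (y - x)" by simp
      show "norm (norm y - norm x - dd x (y - x)) \<le> e * norm (y - x)" using up lo by simp
    qed
  qed
  then show ?thesis unfolding differentiable_def by blast
qed



lemma par_helper:
  fixes x w :: "'a::real_normed_vector"
  assumes k: "k \<noteq> 0" and t: "t \<noteq> 0" and eq: "(1/k) *\<^sub>R (e *\<^sub>R x + t *\<^sub>R w) = s *\<^sub>R x"
  shows "w = ((k * s - e) / t) *\<^sub>R x"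
proof -
  have "e *\<^sub>R x + t *\<^sub>R w = k *\<^sub>R ((1/k) *\<^sub>R (e *\<^sub>R x + t *\<^sub>R w))" using k by simp
  also have "\<dots> = (k * s) *\<^sub>R x" using eq by simp
  finally have "t *\<^sub>R w = (k * s - e) *\<^sub>R x" by (simp add: algebra_simps)
  then have "(1/t) *\<^sub>R (t *\<^sub>R w) = (1/t) *\<^sub>R ((k * s - e) *\<^sub>R x)" by simp
  then show ?thesis using t by (simp add: divide_inverse mult.commute)
qed

lemma construct:
  fixes x y :: "'a::real_normed_vector"
  assumes x1: "norm x = 1" and pos: "dd x y + dd x (- y) > 0"
  shows "\<exists>\<delta>>0. \<exists>\<epsilon>0>0. \<forall>\<epsilon>. 0 < \<epsilon> \<and> \<epsilon> < \<epsilon>0 \<longrightarrow>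
       (\<exists>u v. norm u = 1 \<and> norm v = 1 \<and> u \<notin> {x, -x} \<and> v \<notin> {x, -x} \<and>
              max (norm (u - x)) (norm (v + x)) \<le> \<epsilon> \<and>
              norm (u - v) \<le> 2 - \<delta> * \<epsilon>)"
proof -
  define p where "p = dd x y"
  define q where "q = dd x (- y)"
  define c where "c = (p - q) / 2"
  define w where "w = y + (- c) *\<^sub>R x"
  define \<sigma> where "\<sigma> = (p + q) / 2"
  have sig: "\<sigma> > 0" using pos by (simp add: \<sigma>_def p_def q_def)
  have dw: "dd x w = \<sigma>"
    unfolding w_def using dd_shift[of x y "- c"] x1 by (simp add: p_def c_def \<sigma>_def field_simps)
  have mw: "- w = - y + c *\<^sub>R x" by (simp add: w_def)
  have dmw: "dd x (- w) = \<sigma>"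
    unfolding mw using dd_shift[of x "- y" c] x1 by (simp add: q_def c_def \<sigma>_def field_simps)
  define M where "M = norm w"
  have w0: "w \<noteq> 0" using dw sig dd_zero[of x] by auto
  then have Mpos: "M > 0" by (simp add: M_def)
  have notpar: "w \<noteq> m *\<^sub>R x" for m
  proof
    assume wm: "w = m *\<^sub>R x"
    have "dd x w = m" using wm dd_mult_self[of x m] x1 by simp
    moreover have "dd x (- w) = - m" using wm dd_mult_self[of x "- m"] x1 by simp
    ultimately show False using dw dmw sig by simp
  qed
  define \<delta> where "\<delta> = \<sigma> / (4 * M)"
  define \<epsilon>0 where "\<epsilon>0 = min (2 * M / \<sigma>) (\<sigma> / M)"
  have dpos: "\<delta> > 0" using sig Mpos by (simp add: \<delta>_def)
  have e0pos: "\<epsilon>0 > 0" using sig Mpos by (simp add: \<epsilon>0_def)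
  have main: "\<forall>\<epsilon>. 0 < \<epsilon> \<and> \<epsilon> < \<epsilon>0 \<longrightarrow>
       (\<exists>u v. norm u = 1 \<and> norm v = 1 \<and> u \<notin> {x, -x} \<and> v \<notin> {x, -x} \<and>
              max (norm (u - x)) (norm (v + x)) \<le> \<epsilon> \<and>
              norm (u - v) \<le> 2 - \<delta> * \<epsilon>)"
  proof (intro allI impI)
    fix \<epsilon> :: real assume "0 < \<epsilon> \<and> \<epsilon> < \<epsilon>0"
    then have e: "0 < \<epsilon>" "\<epsilon> < 2 * M / \<sigma>" "\<epsilon> < \<sigma> / M" by (auto simp: \<epsilon>0_def)
    define t where "t = \<epsilon> / (2 * M)"
    have tpos: "t > 0" using e Mpos by (simp add: t_def)
    have ts1: "t * \<sigma> < 1"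
    proof -
      have "\<epsilon> * \<sigma> < 2 * M" using e sig by (simp add: field_simps)
      then show ?thesis using Mpos by (simp add: t_def field_simps)
    qed
    have tM2: "t * M * M < \<sigma> / 2"
    proof -
      have "\<epsilon> * M < \<sigma>" using e Mpos by (simp add: field_simps)
      then show ?thesis using Mpos by (simp add: t_def field_simps)
    qed
    have tMe: "2 * t * M = \<epsilon>" using Mpos by (simp add: t_def)
    define a where "a = norm (x + t *\<^sub>R w)"
    define b where "b = norm (x + t *\<^sub>R (- w))"
    have a1: "1 + t * \<sigma> \<le> a"
    proof -
      have "\<sigma> \<le> Qd x w t" using dd_le[OF tpos, of x w] dw by simp
      then have "t * \<sigma> \<le> t * Qd x w t" using tpos by simp
      then show ?thesis using Qd_mult[OF tpos, of x w] x1 by (simp add: a_def)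
    qed
    have b1: "1 + t * \<sigma> \<le> b"
    proof -
      have "\<sigma> \<le> Qd x (- w) t" using dd_le[OF tpos, of x "- w"] dmw by simp
      then have "t * \<sigma> \<le> t * Qd x (- w) t" using tpos by simp
      then show ?thesis using Qd_mult[OF tpos, of x "- w"] x1 by (simp add: b_def)
    qed
    have a2: "a \<le> 1 + t * M"
      using norm_triangle_ineq[of x "t *\<^sub>R w"] x1 tpos by (simp add: a_def M_def)
    have b2: "b \<le> 1 + t * M"
      using norm_triangle_ineq[of x "t *\<^sub>R (- w)"] x1 tpos by (simp add: b_def M_def)
    have tsp: "t * \<sigma> > 0" using tpos sig by simp
    have apos: "a \<ge> 1" and bpos: "b \<ge> 1" using a1 b1 tsp by linarith+
    define u where "u = (1/a) *\<^sub>R (x + t *\<^sub>R w)"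
    define v where "v = (1/b) *\<^sub>R ((- 1) *\<^sub>R x + t *\<^sub>R w)"
    have nb: "norm ((- 1) *\<^sub>R x + t *\<^sub>R w) = b"
    proof -
      have "(- 1) *\<^sub>R x + t *\<^sub>R w = - (x + t *\<^sub>R (- w))" by simp
      then show ?thesis unfolding b_def by (metis norm_minus_cancel)
    qed
    have nu: "norm u = 1" using apos by (simp add: u_def a_def[symmetric])
    have nv: "norm v = 1" using bpos nb by (simp add: v_def)
    have ux: "u \<notin> {x, - x}"
    proof
      assume "u \<in> {x, - x}"
      then have "u = 1 *\<^sub>R x \<or> u = (- 1) *\<^sub>R x" by auto
      then obtain s where "u = s *\<^sub>R x" by blast
      then have "(1/a) *\<^sub>R (1 *\<^sub>R x + t *\<^sub>R w) = s *\<^sub>R x" by (simp add: u_def)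
      then have "w = ((a * s - 1) / t) *\<^sub>R x" using apos tpos by (intro par_helper) auto
      then show False using notpar by blast
    qed
    have vx: "v \<notin> {x, - x}"
    proof
      assume "v \<in> {x, - x}"
      then have "v = 1 *\<^sub>R x \<or> v = (- 1) *\<^sub>R x" by auto
      then obtain s where "v = s *\<^sub>R x" by blast
      then have "(1/b) *\<^sub>R ((- 1) *\<^sub>R x + t *\<^sub>R w) = s *\<^sub>R x" by (simp add: v_def)
      then have "w = ((b * s - (- 1)) / t) *\<^sub>R x" using bpos tpos by (intro par_helper) auto
      then show False using notpar by blast
    qed
    have tw: "norm (t *\<^sub>R w) = t * M" using tpos by (simp add: M_def)
    have du: "norm (u - x) \<le> \<epsilon>"
    proof -
      have eq: "u - x = (1/a) *\<^sub>R (t *\<^sub>R w) + (1/a - 1) *\<^sub>R x"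
        by (simp add: u_def algebra_simps)
      have "norm (u - x) \<le> norm ((1/a) *\<^sub>R (t *\<^sub>R w)) + norm ((1/a - 1) *\<^sub>R x)"
        unfolding eq by (rule norm_triangle_ineq)
      also have "\<dots> = (1/a) * (t * M) + \<bar>1/a - 1\<bar>" using apos tw x1 by simp
      also have "\<dots> \<le> t * M + t * M"
      proof -
        have "(1/a) * (t * M) \<le> t * M" using apos tpos Mpos by (simp add: field_simps)
        moreover have "\<bar>1/a - 1\<bar> \<le> t * M"
        proof -
          have "1/a \<le> 1" using apos by simp
          moreover have "1 - 1/a \<le> a - 1"
          proof -
            have "0 \<le> (a - 1) * (a - 1)" by simp
            then have "a * 2 \<le> 1 + a * a" by (simp add: algebra_simps)
            then show ?thesis using apos by (simp add: field_simps)
          qed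
          ultimately show ?thesis using a2 by simp
        qed
        ultimately show ?thesis by linarith
      qed
      finally show ?thesis using tMe by (simp add: mult_ac)
    qed
    have dv: "norm (v + x) \<le> \<epsilon>"
    proof -
      have eq: "v + x = (1/b) *\<^sub>R (t *\<^sub>R w) + (1 - 1/b) *\<^sub>R x"
        by (simp add: v_def algebra_simps)
      have "norm (v + x) \<le> norm ((1/b) *\<^sub>R (t *\<^sub>R w)) + norm ((1 - 1/b) *\<^sub>R x)"
        unfolding eq by (rule norm_triangle_ineq)
      also have "\<dots> = (1/b) * (t * M) + \<bar>1 - 1/b\<bar>" using bpos tw x1 by simp
      also have "\<dots> \<le> t * M + t * M"
      proof -
        have "(1/b) * (t * M) \<le> t * M" using bpos tpos Mpos by (simp add: field_simps)
        moreover have "\<bar>1 - 1/b\<bar> \<le> t * M"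
        proof -
          have "1/b \<le> 1" using bpos by simp
          moreover have "1 - 1/b \<le> b - 1"
          proof -
            have "0 \<le> (b - 1) * (b - 1)" by simp
            then have "b * 2 \<le> 1 + b * b" by (simp add: algebra_simps)
            then show ?thesis using bpos by (simp add: field_simps)
          qed
          ultimately show ?thesis using b2 by simp
        qed
        ultimately show ?thesis by linarith
      qed
      finally show ?thesis using tMe by (simp add: mult_ac)
    qed
    have duv: "norm (u - v) \<le> 2 - \<delta> * \<epsilon>"
    proof -
      have eq: "u - v = (1/a + 1/b) *\<^sub>R x + (t * (1/a - 1/b)) *\<^sub>R w"
        by (simp add: u_def v_def algebra_simps)
      have "norm (u - v) \<le> norm ((1/a + 1/b) *\<^sub>R x) + norm ((t * (1/a - 1/b)) *\<^sub>R w)"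
        unfolding eq by (rule norm_triangle_ineq)
      also have "\<dots> = (1/a + 1/b) + t * \<bar>1/a - 1/b\<bar> * M"
        using apos bpos tpos x1 by (simp add: M_def abs_mult)
      also have "\<dots> \<le> 2 / (1 + t * \<sigma>) + t * (t * M) * M"
      proof -
        have ia: "1/a \<le> 1 / (1 + t * \<sigma>)" using a1 tsp by (intro divide_left_mono) auto
        have ib: "1/b \<le> 1 / (1 + t * \<sigma>)" using b1 tsp by (intro divide_left_mono) auto
        have "\<bar>1/a - 1/b\<bar> = \<bar>b - a\<bar> / (a * b)" using apos bpos by (simp add: field_simps)
        also have "\<dots> \<le> \<bar>b - a\<bar>"
        proof -
          have "1 * 1 \<le> a * b" by (rule mult_mono) (use apos bpos in auto)
          then have "\<bar>b - a\<bar> / (a * b) \<le> \<bar>b - a\<bar> / 1" by (intro divide_left_mono) auto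
          then show ?thesis by simp
        qed
        also have "\<dots> \<le> t * M" using apos bpos a2 b2 by linarith
        finally have iab: "\<bar>1/a - 1/b\<bar> \<le> t * M" .
        have "t * \<bar>1/a - 1/b\<bar> * M \<le> t * (t * M) * M"
          using iab tpos Mpos by (intro mult_right_mono mult_left_mono) auto
        then show ?thesis using ia ib by linarith
      qed
      also have "\<dots> \<le> 2 - t * \<sigma> / 2"
      proof -
        let ?z = "t * \<sigma>"
        have "?z * ?z \<le> ?z * 1" using tsp ts1 by (intro mult_left_mono) auto
        then have "?z * ?z \<le> ?z" by simp
        then have "2 \<le> (2 - ?z) * (1 + ?z)" by (simp add: algebra_simps)
        then have "2 / (1 + ?z) \<le> 2 - ?z" using tsp by (simp add: divide_le_eq)
        moreover have "t * (t * M) * M \<le> t * \<sigma> / 2"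
        proof -
          have "t * (t * M * M) \<le> t * (\<sigma> / 2)" using tM2 tpos by (intro mult_left_mono) auto
          then show ?thesis by (simp add: mult_ac)
        qed
        ultimately show ?thesis by linarith
      qed
      also have "\<dots> = 2 - \<delta> * \<epsilon>" using Mpos by (simp add: \<delta>_def t_def field_simps)
      finally show ?thesis .
    qed
    show "\<exists>u v. norm u = 1 \<and> norm v = 1 \<and> u \<notin> {x, -x} \<and> v \<notin> {x, -x} \<and>
              max (norm (u - x)) (norm (v + x)) \<le> \<epsilon> \<and>
              norm (u - v) \<le> 2 - \<delta> * \<epsilon>"
      using nu nv ux vx du dv duv by (intro exI[of _ u] exI[of _ v]) simp
  qed
  show ?thesis using dpos e0pos main by blast
qed



lemma diff_not_cond:
  fixes x :: "'a::real_normed_vector"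
  assumes x1: "norm x = 1" and dif: "norm differentiable (at x)"
  shows "\<not> (\<exists>\<delta>>0. \<exists>\<epsilon>0>0. \<forall>\<epsilon>. 0 < \<epsilon> \<and> \<epsilon> < \<epsilon>0 \<longrightarrow>
       (\<exists>u v. norm u = 1 \<and> norm v = 1 \<and> u \<notin> {x, -x} \<and> v \<notin> {x, -x} \<and>
              max (norm (u - x)) (norm (v + x)) \<le> \<epsilon> \<and>
              norm (u - v) \<le> 2 - \<delta> * \<epsilon>))"
proof
  assume "\<exists>\<delta>>0. \<exists>\<epsilon>0>0. \<forall>\<epsilon>. 0 < \<epsilon> \<and> \<epsilon> < \<epsilon>0 \<longrightarrow>
       (\<exists>u v. norm u = 1 \<and> norm v = 1 \<and> u \<notin> {x, -x} \<and> v \<notin> {x, -x} \<and>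
              max (norm (u - x)) (norm (v + x)) \<le> \<epsilon> \<and>
              norm (u - v) \<le> 2 - \<delta> * \<epsilon>)"
  then obtain \<delta> \<epsilon>0 where dpos: "\<delta> > 0" and e0: "\<epsilon>0 > 0" and P: "\<And>\<epsilon>. 0 < \<epsilon> \<Longrightarrow> \<epsilon> < \<epsilon>0 \<Longrightarrow>
       (\<exists>u v. norm u = 1 \<and> norm v = 1 \<and> u \<notin> {x, -x} \<and> v \<notin> {x, -x} \<and>
              max (norm (u - x)) (norm (v + x)) \<le> \<epsilon> \<and>
              norm (u - v) \<le> 2 - \<delta> * \<epsilon>)"
    by blast
  obtain D where D: "(norm has_derivative D) (at x)" using dif unfolding differentiable_def by blast
  then have bl: "bounded_linear D"
    and lim: "\<forall>e>0. \<exists>d>0. \<forall>y. norm (y - x) < d \<longrightarrow> norm (norm y - norm x - D (y - x)) \<le> e * norm (y - x)"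
    unfolding has_derivative_at_alt by auto
  have lin: "linear D" using bl by (rule bounded_linear.linear)
  define \<eta> where "\<eta> = \<delta> / 8"
  have eta: "\<eta> > 0" using dpos by (simp add: \<eta>_def)
  obtain r where r: "r > 0" and R: "\<And>y. norm (y - x) < r \<Longrightarrow> \<bar>norm y - norm x - D (y - x)\<bar> \<le> \<eta> * norm (y - x)"
    using lim eta by force
  define \<epsilon> where "\<epsilon> = min (\<epsilon>0 / 2) (r / 4)"
  have epos: "\<epsilon> > 0" and elt: "\<epsilon> < \<epsilon>0" and er: "2 * \<epsilon> < r"
    using e0 r by (auto simp: \<epsilon>_def)
  obtain u v where nu: "norm u = 1" and nv: "norm v = 1"
    and mx: "max (norm (u - x)) (norm (v + x)) \<le> \<epsilon>" and uv: "norm (u - v) \<le> 2 - \<delta> * \<epsilon>"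
    using P[OF epos elt] by blast
  define h1 where "h1 = u - x"
  define h2 where "h2 = v + x"
  have n1: "norm h1 \<le> \<epsilon>" and n2: "norm h2 \<le> \<epsilon>" using mx by (auto simp: h1_def h2_def)
  have Dh1: "\<bar>D h1\<bar> \<le> \<eta> * \<epsilon>"
  proof -
    have "norm (u - x) < r" using n1 er epos by (simp add: h1_def)
    then have "\<bar>norm u - norm x - D (u - x)\<bar> \<le> \<eta> * norm (u - x)" by (rule R)
    then have "\<bar>D h1\<bar> \<le> \<eta> * norm h1" using nu x1 by (simp add: h1_def)
    also have "\<dots> \<le> \<eta> * \<epsilon>" using n1 eta by (intro mult_left_mono) auto
    finally show ?thesis .
  qed
  have Dh2: "\<bar>D h2\<bar> \<le> \<eta> * \<epsilon>"
  proof -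
    have e1: "- v - x = - h2" by (simp add: h2_def)
    have "norm (- v - x) < r" using n2 er epos unfolding e1 by simp
    then have "\<bar>norm (- v) - norm x - D (- v - x)\<bar> \<le> \<eta> * norm (- v - x)" by (rule R)
    then have "\<bar>D (- h2)\<bar> \<le> \<eta> * norm h2" using nv x1 unfolding e1 by simp
    then have "\<bar>D h2\<bar> \<le> \<eta> * norm h2" using linear_neg[OF lin, of h2] by simp
    also have "\<dots> \<le> \<eta> * \<epsilon>" using n2 eta by (intro mult_left_mono) auto
    finally show ?thesis .
  qed
  define k where "k = (1/2) *\<^sub>R (h1 - h2)"
  have Dk: "D k = (D h1 - D h2) / 2"
    unfolding k_def using linear_scale[OF lin] linear_diff[OF lin] by simp
  have nk: "norm k \<le> \<epsilon>"
  proof -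
    have "norm (h1 - h2) \<le> norm h1 + norm h2" by (rule norm_triangle_ineq4)
    then have "norm (h1 - h2) \<le> 2 * \<epsilon>" using n1 n2 by linarith
    then show ?thesis by (simp add: k_def)
  qed
  have "norm ((x + k) - x) < r" using nk er epos by simp
  then have "\<bar>norm (x + k) - norm x - D ((x + k) - x)\<bar> \<le> \<eta> * norm ((x + k) - x)" by (rule R)
  then have "\<bar>norm (x + k) - 1 - D k\<bar> \<le> \<eta> * norm k" using x1 by simp
  moreover have "\<eta> * norm k \<le> \<eta> * \<epsilon>" using nk eta by (intro mult_left_mono) auto
  ultimately have lowk: "norm (x + k) \<ge> 1 + D k - \<eta> * \<epsilon>" by linarith
  have a: "- (\<eta> * \<epsilon>) \<le> D h1" using Dh1 by (simp add: abs_le_iff)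
  have b: "D h2 \<le> \<eta> * \<epsilon>" using Dh2 by (simp add: abs_le_iff)
  have "2 * D k = D h1 - D h2" using Dk by simp
  then have "2 * D k \<ge> - 2 * (\<eta> * \<epsilon>)" using a b by linarith
  then have "D k \<ge> - (\<eta> * \<epsilon>)" by linarith
  then have lk: "norm (x + k) \<ge> 1 - 2 * (\<eta> * \<epsilon>)" using lowk by linarith
  have "u - v = 2 *\<^sub>R (x + k)"
    by (simp add: k_def h1_def h2_def algebra_simps scaleR_2)
  then have "norm (u - v) = 2 * norm (x + k)" by simp
  then have "norm (u - v) \<ge> 2 - 4 * (\<eta> * \<epsilon>)" using lk by linarith
  moreover have "2 * (4 * (\<eta> * \<epsilon>)) = \<delta> * \<epsilon>" by (simp add: \<eta>_def)
  moreover have "\<delta> * \<epsilon> > 0" using dpos epos by simp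
  ultimately show False using uv by linarith
qed


theorem proposition1:
  fixes x :: "'a::real_normed_vector"
  assumes findim: "\<exists>B::'a set. finite B \<and> span B = UNIV"
    and x_sphere: "norm x = 1"
  shows "\<not> (norm differentiable (at x)) \<longleftrightarrow>
    (\<exists>\<delta>>0. \<exists>\<epsilon>0>0. \<forall>\<epsilon>. 0 < \<epsilon> \<and> \<epsilon> < \<epsilon>0 \<longrightarrow>
       (\<exists>u v. norm u = 1 \<and> norm v = 1 \<and> u \<notin> {x, -x} \<and> v \<notin> {x, -x} \<and>
              max (norm (u - x)) (norm (v + x)) \<le> \<epsilon> \<and>
              norm (u - v) \<le> 2 - \<delta> * \<epsilon>))"
proof
  assume nd: "\<not> (norm differentiable (at x))"
  have "\<exists>y. dd x y + dd x (- y) > 0"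
  proof (rule ccontr)
    assume "\<not> (\<exists>y. dd x y + dd x (- y) > 0)"
    then have "\<And>h. dd x h + dd x (- h) \<le> 0" by (simp add: not_less)
    then have "norm differentiable (at x)" by (rule norm_diff_at[OF findim x_sphere])
    then show False using nd by simp
  qed
  then obtain y where y: "dd x y + dd x (- y) > 0" by blast
  show "\<exists>\<delta>>0. \<exists>\<epsilon>0>0. \<forall>\<epsilon>. 0 < \<epsilon> \<and> \<epsilon> < \<epsilon>0 \<longrightarrow>
       (\<exists>u v. norm u = 1 \<and> norm v = 1 \<and> u \<notin> {x, -x} \<and> v \<notin> {x, -x} \<and>
              max (norm (u - x)) (norm (v + x)) \<le> \<epsilon> \<and>
              norm (u - v) \<le> 2 - \<delta> * \<epsilon>)"
    by (rule construct[OF x_sphere y])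
next
  assume R: "\<exists>\<delta>>0. \<exists>\<epsilon>0>0. \<forall>\<epsilon>. 0 < \<epsilon> \<and> \<epsilon> < \<epsilon>0 \<longrightarrow>
       (\<exists>u v. norm u = 1 \<and> norm v = 1 \<and> u \<notin> {x, -x} \<and> v \<notin> {x, -x} \<and>
              max (norm (u - x)) (norm (v + x)) \<le> \<epsilon> \<and>
              norm (u - v) \<le> 2 - \<delta> * \<epsilon>)"
  show "\<not> (norm differentiable (at x))"
  proof
    assume "norm differentiable (at x)"
    from diff_not_cond[OF x_sphere this] R show False by blast
  qed
qed

end
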